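(* Let $A$ be a cyclic Leibniz algebra generated by $a$, with $p(x)$ as in the context. Then $\Phi(A)=0$ if and only if $p(x)$ is a product of distinct irreducible factors (i.e. $n_1=\cdots=n_s=1$).
   Context: A (left) Leibniz algebra is an algebra satisfying $x(yz)=(xy)z+y(xz)$ for all $x,y,z$; all algebras are finite-dimensional over a field $F$. $A$ is a cyclic Leibniz algebra generated by $a$: $A$ is generated as an algebra by the single element $a$, and with $a^1=a$, $a^{k+1}=aa^k$, the elements $a,a^2,\dots,a^n$ form a basis of $A$. Write $aa^n=\alpha_2a^2+\cdots+\alpha_na^n$. $L_a:A\to A$ is $b\mapsto ab$, with characteristic (and minimal) polynomial $p(x)=x^n-\alpha_nx^{n-1}-\cdots-\alpha_2x=p_1(x)^{n_1}\cdots p_s(x)^{n_s}$, the $p_j$ distinct monic irreducibles over $F$, $p_1(x)=x$. $\Phi(A)$ is the intersection of all maximal subalgebras of $A$. *)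

theory Defs
  imports Main "HOL-Computational_Algebra.Polynomial" "HOL-Computational_Algebra.Squarefree"
begin

definition bilinear_product :: "('f::field \<Rightarrow> 'v::ab_group_add \<Rightarrow> 'v) \<Rightarrow> ('v \<Rightarrow> 'v \<Rightarrow> 'v) \<Rightarrow> bool" where
  "bilinear_product scale mul \<longleftrightarrow>
     (\<forall>x y z. mul (x + y) z = mul x z + mul y z) \<and>
     (\<forall>x y z. mul x (y + z) = mul x y + mul x z) \<and>
     (\<forall>c x y. mul (scale c x) y = scale c (mul x y)) \<and>
     (\<forall>c x y. mul x (scale c y) = scale c (mul x y))"

definition left_leibniz :: "('v::ab_group_add \<Rightarrow> 'v \<Rightarrow> 'v) \<Rightarrow> bool" where
  "left_leibniz mul \<longleftrightarrow>
     (\<forall>x y z. mul x (mul y z) = mul (mul x y) z + mul y (mul x z))"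

definition leibniz_algebra :: "('f::field \<Rightarrow> 'v::ab_group_add \<Rightarrow> 'v) \<Rightarrow> ('v \<Rightarrow> 'v \<Rightarrow> 'v) \<Rightarrow> bool" where
  "leibniz_algebra scale mul \<longleftrightarrow>
     vector_space scale \<and> bilinear_product scale mul \<and> left_leibniz mul"

definition subalgebra :: "('f::field \<Rightarrow> 'v::ab_group_add \<Rightarrow> 'v) \<Rightarrow> ('v \<Rightarrow> 'v \<Rightarrow> 'v) \<Rightarrow> 'v set \<Rightarrow> bool" where
  "subalgebra scale mul S \<longleftrightarrow>
     module.subspace scale S \<and> (\<forall>x\<in>S. \<forall>y\<in>S. mul x y \<in> S)"

definition maximal_subalgebra :: "('f::field \<Rightarrow> 'v::ab_group_add \<Rightarrow> 'v) \<Rightarrow> ('v \<Rightarrow> 'v \<Rightarrow> 'v) \<Rightarrow> 'v set \<Rightarrow> bool" where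
  "maximal_subalgebra scale mul M \<longleftrightarrow>
     subalgebra scale mul M \<and> M \<noteq> UNIV \<and>
     (\<forall>T. subalgebra scale mul T \<and> M \<subseteq> T \<longrightarrow> T = M \<or> T = UNIV)"

definition frattini :: "('f::field \<Rightarrow> 'v::ab_group_add \<Rightarrow> 'v) \<Rightarrow> ('v \<Rightarrow> 'v \<Rightarrow> 'v) \<Rightarrow> 'v set" where
  "frattini scale mul = \<Inter>{M. maximal_subalgebra scale mul M}"

definition lpow :: "('v \<Rightarrow> 'v \<Rightarrow> 'v) \<Rightarrow> 'v \<Rightarrow> nat \<Rightarrow> 'v" where
  "lpow mul a k = (mul a ^^ (k - 1)) a"

definition generated_by :: "('f::field \<Rightarrow> 'v::ab_group_add \<Rightarrow> 'v) \<Rightarrow> ('v \<Rightarrow> 'v \<Rightarrow> 'v) \<Rightarrow> 'v \<Rightarrow> bool" where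
  "generated_by scale mul a \<longleftrightarrow> (\<forall>S. subalgebra scale mul S \<and> a \<in> S \<longrightarrow> S = UNIV)"

text \<open>p(x) = x^n - alpha_n x^(n-1) - ... - alpha_2 x, where a a^n = sum_{k=2..n} alpha_k a^k.\<close>
definition cyc_poly :: "nat \<Rightarrow> (nat \<Rightarrow> 'f::field) \<Rightarrow> 'f poly" where
  "cyc_poly n \<alpha> = monom 1 n - (\<Sum>k=2..n. monom (\<alpha> k) (k - 1))"

end

theory Submission
  imports Defs "HOL-Computational_Algebra.Computational_Algebra"
begin

lemma poly_min_comb:
  fixes f g :: "'f::field poly"
  assumes "f \<noteq> 0 \<or> g \<noteq> 0"
  shows "\<exists>d u w. d = u * f + w * g \<and> d \<noteq> 0 \<and> d dvd f \<and> d dvd g"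
proof -
  define Q where "Q = (\<lambda>p :: 'f poly \<times> 'f poly. fst p * f + snd p * g \<noteq> 0)"
  have "Q (1, 0) \<or> Q (0, 1)" using assms by (auto simp: Q_def)
  then obtain p0 where "Q p0" by blast
  then obtain p where p: "Q p" and pmin: "\<And>r. Q r \<Longrightarrow> degree (fst p * f + snd p * g) \<le> degree (fst r * f + snd r * g)"
    using ex_has_least_nat[of Q p0 "\<lambda>p. degree (fst p * f + snd p * g)"] by blast
  define d where "d = fst p * f + snd p * g"
  have dnz: "d \<noteq> 0" using p by (simp add: Q_def d_def)
  have dv: "d dvd (s * f + t * g)" for s t
  proof -
    define h where "h = s * f + t * g"
    define r where "r = h mod d"
    have "r = h - (h div d) * d" by (simp add: r_def minus_div_mult_eq_mod)
    also have "\<dots> = (s - (h div d) * fst p) * f + (t - (h div d) * snd p) * g"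
      by (simp add: h_def d_def algebra_simps)
    finally have req: "r = (s - (h div d) * fst p) * f + (t - (h div d) * snd p) * g" .
    have "r = 0"
    proof (rule ccontr)
      assume rnz: "r \<noteq> 0"
      then have "Q (s - (h div d) * fst p, t - (h div d) * snd p)" using req by (simp add: Q_def)
      then have "degree d \<le> degree r" using pmin[of "(s - (h div d) * fst p, t - (h div d) * snd p)"]
        by (simp add: d_def req)
      moreover have "degree r < degree d" using degree_mod_less'[OF dnz] rnz by (simp add: r_def)
      ultimately show False by simp
    qed
    then show ?thesis by (simp add: r_def h_def mod_eq_0_iff_dvd)
  qed
  have "d dvd f" using dv[of 1 0] by simp
  moreover have "d dvd g" using dv[of 0 1] by simp
  ultimately show ?thesis using dnz d_def by blast
qed

lemma irr_bezout:
  fixes q f :: "'f::field poly"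
  assumes q: "irreducible q" and nd: "\<not> q dvd f"
  shows "\<exists>u w. u * q + w * f = 1"
proof -
  have "q \<noteq> 0" using q by auto
  then obtain d u w where d: "d = u * q + w * f" "d \<noteq> 0" "d dvd q" "d dvd f"
    using poly_min_comb[of q f] by blast
  then obtain c where c: "q = d * c" by (auto elim: dvdE)
  then have "is_unit d \<or> is_unit c" using q irreducibleD by blast
  moreover have "\<not> is_unit c"
  proof
    assume "is_unit c"
    then have "q dvd f" using c d(4) mult_unit_dvd_iff by metis
    then show False using nd by simp
  qed
  ultimately have "is_unit d" by blast
  then obtain k where k: "1 = d * k" by (auto elim: dvdE)
  have "(k * u) * q + (k * w) * f = 1" using k d(1) by (simp add: algebra_simps)
  then show ?thesis by blast
qed

lemma irr_factor:
  fixes e :: "'f::field poly"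
  assumes "e \<noteq> 0" "\<not> is_unit e"
  shows "\<exists>q. irreducible q \<and> q dvd e"
proof -
  define Q where "Q = (\<lambda>q :: 'f poly. q dvd e \<and> \<not> is_unit q)"
  have "Q e" using assms by (simp add: Q_def)
  then obtain q where qQ: "Q q" and qmin: "\<And>r. Q r \<Longrightarrow> degree q \<le> degree r"
    using ex_has_least_nat[of Q e degree] by blast
  have qnz: "q \<noteq> 0" using qQ assms by (auto simp: Q_def)
  have "irreducible q"
  proof (rule irreducibleI)
    show "q \<noteq> 0" by (rule qnz)
    show "\<not> is_unit q" using qQ by (simp add: Q_def)
    fix x y assume xy: "q = x * y"
    show "is_unit x \<or> is_unit y"
    proof (rule ccontr)
      assume nu: "\<not> (is_unit x \<or> is_unit y)"
      have xnz: "x \<noteq> 0" "y \<noteq> 0" using xy qnz by auto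
      have "x dvd e" using qQ xy by (auto simp: Q_def intro: dvd_trans)
      then have "Q x" using nu by (simp add: Q_def)
      then have "degree q \<le> degree x" by (rule qmin)
      moreover have "degree q = degree x + degree y" using xy xnz by (simp add: degree_mult_eq)
      moreover have "degree y \<noteq> 0" using nu is_unit_iff_degree[OF xnz(2)] by blast
      ultimately show False by simp
    qed
  qed
  then show ?thesis using qQ by (auto simp: Q_def)
qed

locale cyc =
  fixes scale :: "'f::field \<Rightarrow> 'v::ab_group_add \<Rightarrow> 'v" (infixr \<open>*s\<close> 75)
    and mul :: "'v \<Rightarrow> 'v \<Rightarrow> 'v"
    and a :: 'v and n :: nat and \<alpha> :: "nat \<Rightarrow> 'f"
  assumes leib: "leibniz_algebra scale mul"
    and n1: "n \<ge> 1"
    and inj: "inj_on (lpow mul a) {1..n}"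
    and indep: "\<not> module.dependent scale (lpow mul a ` {1..n})"
    and spanU: "module.span scale (lpow mul a ` {1..n}) = UNIV"
    and rel: "mul a (lpow mul a n) = (\<Sum>k=2..n. scale (\<alpha> k) (lpow mul a k))"
begin

sublocale vs: vector_space scale
  using leib unfolding leibniz_algebra_def by auto

lemma bil: "bilinear_product scale mul" using leib unfolding leibniz_algebra_def by auto
lemma lz: "left_leibniz mul" using leib unfolding leibniz_algebra_def by auto

lemma mul_addL: "mul (x + y) z = mul x z + mul y z" using bil unfolding bilinear_product_def by auto
lemma mul_addR: "mul x (y + z) = mul x y + mul x z" using bil unfolding bilinear_product_def by auto
lemma mul_scaleL: "mul (c *s x) y = c *s (mul x y)" using bil unfolding bilinear_product_def by auto
lemma mul_scaleR: "mul x (c *s y) = c *s (mul x y)" using bil unfolding bilinear_product_def by auto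
lemma leibz: "mul x (mul y z) = mul (mul x y) z + mul y (mul x z)" using lz unfolding left_leibniz_def by blast

lemma mul_0L[simp]: "mul 0 y = 0"
  using mul_addL[of 0 0 y] by simp
lemma mul_0R[simp]: "mul x 0 = 0"
  using mul_addR[of x 0 0] by simp
lemma mul_diffL: "mul (x - y) z = mul x z - mul y z"
  using mul_addL[of "x - y" y z] by (simp add: algebra_simps)
lemma mul_diffR: "mul z (x - y) = mul z x - mul z y"
  using mul_addR[of z "x - y" y] by (simp add: algebra_simps)
lemma mul_sumR: "finite A \<Longrightarrow> mul x (\<Sum>i\<in>A. f i) = (\<Sum>i\<in>A. mul x (f i))"
  by (induction A rule: finite_induct) (auto simp: mul_addR)

definition T where "T = mul a"
definition E where "E k = (T ^^ k) a"
definition L where "L = vs.span (E ` {1..<n})"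
definition phi :: "'f poly \<Rightarrow> 'v" where "phi f = (\<Sum>i\<le>degree f. coeff f i *s E i)"
definition P where "P = cyc_poly n \<alpha>"

lemma E0[simp]: "E 0 = a" by (simp add: E_def)
lemma ESuc: "E (Suc k) = T (E k)" by (simp add: E_def)
lemma lpowE: "k \<ge> 1 \<Longrightarrow> lpow mul a k = E (k - 1)"
  by (simp add: lpow_def E_def T_def)
lemma img: "lpow mul a ` {1..n} = E ` {0..<n}"
proof -
  have "lpow mul a ` {1..n} = (\<lambda>i. lpow mul a (Suc i)) ` {0..<n}"
  proof (rule set_eqI, rule iffI)
    fix x assume "x \<in> lpow mul a ` {1..n}"
    then obtain k where k: "k \<in> {1..n}" "x = lpow mul a k" by auto
    then have "k - 1 \<in> {0..<n}" "Suc (k - 1) = k" by auto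
    then show "x \<in> (\<lambda>i. lpow mul a (Suc i)) ` {0..<n}" using k by (metis image_eqI)
  qed auto
  also have "\<dots> = E ` {0..<n}" by (simp add: lpowE)
  finally show ?thesis .
qed


lemma T_add: "T (x + y) = T x + T y" by (simp add: T_def mul_addR)
lemma T_scale: "T (c *s x) = c *s T x" by (simp add: T_def mul_scaleR)
lemma T_0[simp]: "T 0 = 0" by (simp add: T_def)
lemma T_diff: "T (x - y) = T x - T y" by (simp add: T_def mul_diffR)
lemma T_sum: "finite A \<Longrightarrow> T (\<Sum>i\<in>A. f i) = (\<Sum>i\<in>A. T (f i))" by (simp add: T_def mul_sumR)

lemma annih: "k \<ge> 1 \<Longrightarrow> mul (E k) z = 0"
proof (induction k arbitrary: z rule: dec_induct)
  case base
  have "mul a (mul a z) = mul (mul a a) z + mul a (mul a z)" by (rule leibz)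
  then show ?case by (simp add: E_def T_def)
next
  case (step k)
  have "mul a (mul (E k) z) = mul (mul a (E k)) z + mul (E k) (mul a z)" by (rule leibz)
  then show ?case using step.IH by (simp add: ESuc T_def)
qed

lemma span_E: "vs.span (E ` {0..<n}) = UNIV" using spanU img by simp
lemma indep_E: "vs.independent (E ` {0..<n})" using indep img by simp
lemma inj_E: "inj_on E {0..<n}"
proof (rule inj_onI)
  fix i j assume "i \<in> {0..<n}" "j \<in> {0..<n}" "E i = E j"
  then have "lpow mul a (Suc i) = lpow mul a (Suc j)" "Suc i \<in> {1..n}" "Suc j \<in> {1..n}"
    by (auto simp: lpowE)
  then have "Suc i = Suc j" using inj_onD[OF inj] by blast
  then show "i = j" by simp
qed

lemma img_split: "E ` {0..<n} = insert a (E ` {1..<n})"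
proof -
  have "{0..<n} = insert 0 {1..<n}" using n1 by auto
  then show ?thesis by simp
qed

lemma a_notin_L: "a \<notin> L"
proof
  assume "a \<in> L"
  have "a \<notin> E ` {1..<n}"
  proof
    assume "a \<in> E ` {1..<n}"
    then obtain x where x: "x \<in> {1..<n}" "E 0 = E x" by auto
    then have "0 = x" using inj_E n1 inj_onD[OF inj_E x(2)] by auto
    then show False using x by auto
  qed
  then have eq: "E ` {0..<n} - {a} = E ` {1..<n}" using img_split by simp
  have ain: "a \<in> E ` {0..<n}" using img_split by simp
  have "a \<in> vs.span (E ` {0..<n} - {a})" using \<open>a \<in> L\<close> eq unfolding L_def by simp
  then have "vs.dependent (E ` {0..<n})" unfolding vs.dependent_def using ain by blast
  then show False using indep_E by simp
qed

lemma decomp: "\<exists>s. x - s *s a \<in> L"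
  using span_E img_split vs.span_breakdown_eq unfolding L_def by (metis UNIV_I)

lemma L_annih: "l \<in> L \<Longrightarrow> mul l z = 0"
  unfolding L_def
proof (induction rule: vs.span_induct)
  case base show ?case unfolding vs.subspace_def by (auto simp: mul_addL mul_scaleL)
next
  case (step x) then show ?case using annih by auto
qed

lemma mul_decomp: "x - s *s a \<in> L \<Longrightarrow> mul x y = s *s T y"
proof -
  assume "x - s *s a \<in> L"
  then have "mul (x - s *s a) y = 0" by (rule L_annih)
  then show ?thesis by (simp add: mul_diffL mul_scaleL T_def)
qed

lemma L_subspace: "vs.subspace L" unfolding L_def by simp

lemma T_into_L: "T v \<in> L"
proof -
  have "v \<in> vs.span (E ` {0..<n})" using span_E by simp
  then show ?thesis
  proof (induction rule: vs.span_induct)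
    case base show ?case unfolding vs.subspace_def
      using vs.subspace_add[OF L_subspace] vs.subspace_scale[OF L_subspace] vs.subspace_0[OF L_subspace]
      by (simp add: T_add T_scale)
  next
    case (step x)
    then obtain k where k: "k < n" "x = E k" by auto
    show ?case
    proof (cases "Suc k < n")
      case True
      then have "E (Suc k) \<in> E ` {1..<n}" by (intro imageI) auto
      then have "E (Suc k) \<in> L" unfolding L_def by (rule vs.span_base)
      then show ?thesis using k by (simp add: ESuc)
    next
      case False
      then have "k = n - 1" using k by auto
      have ln: "lpow mul a n = E (n - 1)" by (rule lpowE[OF n1])
      have "T x = mul a (lpow mul a n)" using k \<open>k = n - 1\<close> ln by (simp add: T_def)
      also have "\<dots> = (\<Sum>k=2..n. \<alpha> k *s lpow mul a k)" by (rule rel)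
      also have "\<dots> = (\<Sum>k=2..n. \<alpha> k *s E (k - 1))"
        by (rule sum.cong) (auto simp: lpowE)
      also have "\<dots> \<in> L"
      proof (rule vs.subspace_sum[OF L_subspace])
        fix j assume "j \<in> {2..n}"
        then have "E (j - 1) \<in> E ` {1..<n}" by (intro imageI) auto
        then have "E (j - 1) \<in> L" unfolding L_def by (rule vs.span_base)
        then show "\<alpha> j *s E (j - 1) \<in> L" by (rule vs.subspace_scale[OF L_subspace])
      qed
      finally show ?thesis .
    qed
  qed
qed

lemma T_sub_inv: "vs.subspace S \<Longrightarrow> (\<forall>y\<in>S. T y \<in> S) \<Longrightarrow> subalgebra scale mul S"
  unfolding subalgebra_def
proof (intro conjI ballI)
  fix x y assume S: "vs.subspace S" "\<forall>y\<in>S. T y \<in> S" and "x \<in> S" "y \<in> S"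
  obtain s where "x - s *s a \<in> L" using decomp by blast
  then have "mul x y = s *s T y" by (rule mul_decomp)
  then show "mul x y \<in> S" using S \<open>y \<in> S\<close> by (simp add: vs.subspace_scale)
qed

lemma sub_notL_inv: "subalgebra scale mul S \<Longrightarrow> x \<in> S \<Longrightarrow> x \<notin> L \<Longrightarrow> y \<in> S \<Longrightarrow> T y \<in> S"
proof -
  assume S: "subalgebra scale mul S" and x: "x \<in> S" "x \<notin> L" and y: "y \<in> S"
  obtain s where s: "x - s *s a \<in> L" using decomp by blast
  then have "s \<noteq> 0" using x by auto
  have "mul x y = s *s T y" using s by (rule mul_decomp)
  moreover have "mul x y \<in> S" using S x y unfolding subalgebra_def by auto
  ultimately have "inverse s *s (s *s T y) \<in> S" using S unfolding subalgebra_def using vs.subspace_scale by metis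
  then show ?thesis using \<open>s \<noteq> 0\<close> by simp
qed

lemma L_subalg: "subalgebra scale mul L"
  unfolding subalgebra_def using L_subspace L_annih vs.subspace_0 by auto

lemma contains_a: "vs.subspace S \<Longrightarrow> a \<in> S \<Longrightarrow> L \<subseteq> S \<Longrightarrow> S = UNIV"
proof -
  assume S: "vs.subspace S" "a \<in> S" "L \<subseteq> S"
  { fix v obtain s where "v - s *s a \<in> L" using decomp by blast
    then have "v - s *s a + s *s a \<in> S" using S by (meson subsetD vs.subspace_add vs.subspace_scale)
    then have "v \<in> S" by simp }
  then show ?thesis by auto
qed

lemma inv_contains_a: "vs.subspace S \<Longrightarrow> (\<forall>y\<in>S. T y \<in> S) \<Longrightarrow> a \<in> S \<Longrightarrow> S = UNIV"
proof -
  assume S: "vs.subspace S" "\<forall>y\<in>S. T y \<in> S" "a \<in> S"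
  have "E k \<in> S" for k by (induction k) (use S in \<open>auto simp: ESuc\<close>)
  then have "L \<subseteq> S" unfolding L_def using S by (intro vs.span_minimal) auto
  then show ?thesis using S contains_a by blast
qed

lemma L_max: "maximal_subalgebra scale mul L"
  unfolding maximal_subalgebra_def
proof (intro conjI allI impI)
  show "subalgebra scale mul L" by (rule L_subalg)
  show "L \<noteq> UNIV" using a_notin_L by auto
  fix S assume S: "subalgebra scale mul S \<and> L \<subseteq> S"
  show "S = L \<or> S = UNIV"
  proof (cases "S \<subseteq> L")
    case True then show ?thesis using S by auto
  next
    case False
    then obtain x where x: "x \<in> S" "x \<notin> L" by auto
    obtain s where s: "x - s *s a \<in> L" using decomp by blast
    then have "s \<noteq> 0" using x by auto
    have sub: "vs.subspace S" using S unfolding subalgebra_def by auto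
    have "x - (x - s *s a) \<in> S" using s x S sub by (meson subsetD vs.subspace_diff)
    then have "inverse s *s (s *s a) \<in> S" using sub vs.subspace_scale by (simp del: vs.scale_scale)
    then have "a \<in> S" using \<open>s \<noteq> 0\<close> by simp
    then show ?thesis using contains_a sub S by blast
  qed
qed


lemma phi_eq: "degree f \<le> m \<Longrightarrow> phi f = (\<Sum>i\<le>m. coeff f i *s E i)"
  unfolding phi_def by (rule sum.mono_neutral_left) (auto simp: coeff_eq_0)

lemma phi_add: "phi (f + g) = phi f + phi g"
proof -
  define m where "m = max (degree f) (degree g)"
  have "phi (f + g) = (\<Sum>i\<le>m. coeff (f + g) i *s E i)"
    by (rule phi_eq) (simp add: m_def degree_add_le_max)
  also have "\<dots> = (\<Sum>i\<le>m. coeff f i *s E i) + (\<Sum>i\<le>m. coeff g i *s E i)"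
    by (simp add: vs.scale_left_distrib sum.distrib)
  also have "\<dots> = phi f + phi g" using phi_eq[of f m] phi_eq[of g m] by (simp add: m_def)
  finally show ?thesis .
qed

lemma phi_smult: "phi (smult c f) = c *s phi f"
proof -
  have "phi (smult c f) = (\<Sum>i\<le>degree f. coeff (smult c f) i *s E i)"
    by (rule phi_eq) (rule degree_smult_le)
  also have "\<dots> = c *s phi f" by (simp add: phi_def vs.scale_sum_right)
  finally show ?thesis .
qed

lemma phi_0[simp]: "phi 0 = 0" by (simp add: phi_def)

lemma phi_diff: "phi (f - g) = phi f - phi g"
  using phi_add[of "f - g" g] by (simp add: algebra_simps)

lemma phi_sum: "finite A \<Longrightarrow> phi (\<Sum>i\<in>A. f i) = (\<Sum>i\<in>A. phi (f i))"
  by (induction A rule: finite_induct) (auto simp: phi_add)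

lemma phi_pCons0: "phi (pCons 0 f) = T (phi f)"
proof -
  have "phi (pCons 0 f) = (\<Sum>i\<le>Suc (degree f). coeff (pCons 0 f) i *s E i)"
    by (rule phi_eq) (simp add: degree_pCons_le)
  also have "\<dots> = (\<Sum>i\<le>degree f. coeff f i *s E (Suc i))"
    by (subst sum.atMost_Suc_shift) simp
  also have "\<dots> = T (phi f)"
    by (simp add: phi_def T_sum T_scale ESuc)
  finally show ?thesis .
qed

lemma phi_monom: "phi (monom c k) = c *s E k"
proof -
  have "phi (monom c k) = (\<Sum>i\<le>k. coeff (monom c k) i *s E i)"
    by (rule phi_eq) (rule degree_monom_le)
  also have "\<dots> = (\<Sum>i\<le>k. if i = k then c *s E i else 0)"
    by (rule sum.cong) auto
  also have "\<dots> = c *s E k" by simp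
  finally show ?thesis .
qed

lemma phi_1[simp]: "phi 1 = a"
  using phi_monom[of 1 0] by (simp add: monom_0 one_pCons)

lemma phi_const: "phi [:c:] = c *s a"
  using phi_monom[of c 0] by (simp add: monom_0)

lemma phi_pCons: "phi (pCons c g) = c *s a + T (phi g)"
proof -
  have "pCons c g = [:c:] + pCons 0 g" by simp
  then have "phi (pCons c g) = phi ([:c:] + pCons 0 g)" by (rule arg_cong)
  also have "\<dots> = phi [:c:] + phi (pCons 0 g)" by (rule phi_add)
  finally show ?thesis by (simp only: phi_const phi_pCons0)
qed

lemma phi_L: "phi (pCons c g) \<in> L \<longleftrightarrow> c = 0"
proof
  assume h: "phi (pCons c g) \<in> L"
  show "c = 0"
  proof (rule ccontr)
    assume c: "c \<noteq> 0"
    have "phi (pCons c g) - T (phi g) \<in> L"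
      using h T_into_L vs.subspace_diff[OF L_subspace] by blast
    then have "c *s a \<in> L" by (simp add: phi_pCons)
    then have "inverse c *s (c *s a) \<in> L" by (rule vs.subspace_scale[OF L_subspace])
    then show False using c a_notin_L by simp
  qed
next
  assume "c = 0"
  then show "phi (pCons c g) \<in> L" by (simp add: phi_pCons T_into_L)
qed

definition Tinv where "Tinv S \<longleftrightarrow> vs.subspace S \<and> (\<forall>y\<in>S. T y \<in> S)"

lemma phi_mult: "Tinv S \<Longrightarrow> phi f \<in> S \<Longrightarrow> phi (g * f) \<in> S"
proof (induction g)
  case (pCons c g)
  have "phi (pCons c g * f) = c *s phi f + T (phi (g * f))"
    by (simp add: phi_add phi_smult phi_pCons0)
  also have "\<dots> \<in> S" using pCons unfolding Tinv_def
    by (meson vs.subspace_add vs.subspace_scale)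
  finally show ?case .
qed (simp add: Tinv_def vs.subspace_0)

lemma phi_surj: "\<exists>f. phi f = v"
proof -
  have "v \<in> vs.span (E ` {0..<n})" using span_E by simp
  then show ?thesis
  proof (induction rule: vs.span_induct)
    case base show ?case unfolding vs.subspace_def
    proof (intro conjI ballI allI)
      show "0 \<in> {v. \<exists>f. phi f = v}" using phi_0 by blast
      fix x y assume "x \<in> {v. \<exists>f. phi f = v}" "y \<in> {v. \<exists>f. phi f = v}"
      then obtain f g where "phi f = x" "phi g = y" by auto
      then show "x + y \<in> {v. \<exists>f. phi f = v}" using phi_add by blast
    next
      fix c x assume "x \<in> {v. \<exists>f. phi f = v}"
      then obtain f where "phi f = x" by auto
      then show "c *s x \<in> {v. \<exists>f. phi f = v}" using phi_smult by blast
    qed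
  next
    case (step x)
    then obtain k where "x = E k" by auto
    then have "phi (monom 1 k) = x" by (simp add: phi_monom)
    then show ?case by blast
  qed
qed

lemma coeff_P: "coeff P i = (if i = n then 1 else 0) - (\<Sum>k=2..n. if k - 1 = i then \<alpha> k else 0)"
  by (simp add: P_def cyc_poly_def coeff_sum)

lemma coeff_P_n: "coeff P n = 1"
proof -
  have "(\<Sum>k=2..n. if k - 1 = n then \<alpha> k else 0) = 0"
    by (rule sum.neutral) auto
  then show ?thesis by (simp add: coeff_P)
qed

lemma coeff_P_big: "i > n \<Longrightarrow> coeff P i = 0"
proof -
  assume i: "i > n"
  have "(\<Sum>k=2..n. if k - 1 = i then \<alpha> k else 0) = 0"
    by (rule sum.neutral) (use i in auto)
  then show ?thesis using i by (simp add: coeff_P)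
qed

lemma coeff_P_0: "coeff P 0 = 0"
proof -
  have "(\<Sum>k=2..n. if k - 1 = 0 then \<alpha> k else 0) = 0"
    by (rule sum.neutral) auto
  then show ?thesis using n1 by (simp add: coeff_P)
qed

lemma degree_P: "degree P = n"
proof (rule antisym)
  show "degree P \<le> n" by (rule degree_le) (auto intro: coeff_P_big)
  show "n \<le> degree P" by (rule le_degree) (simp add: coeff_P_n)
qed

lemma P_nz: "P \<noteq> 0" using coeff_P_n by auto

lemma phi_P: "phi P = 0"
proof -
  have "P = monom 1 n - (\<Sum>k=2..n. monom (\<alpha> k) (k - 1))" by (simp add: P_def cyc_poly_def)
  then have "phi P = E n - (\<Sum>k=2..n. \<alpha> k *s E (k - 1))"
    by (simp add: phi_diff phi_sum phi_monom)
  also have "E n = mul a (lpow mul a n)"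
  proof -
    have "Suc (n - 1) = n" using n1 by simp
    then have "E n = T (E (n - 1))" using ESuc[of "n - 1"] by simp
    then show ?thesis using lpowE[OF n1] by (simp add: T_def)
  qed
  also have "\<dots> = (\<Sum>k=2..n. \<alpha> k *s lpow mul a k)" by (rule rel)
  also have "\<dots> = (\<Sum>k=2..n. \<alpha> k *s E (k - 1))"
    by (rule sum.cong) (auto simp: lpowE)
  finally show ?thesis by simp
qed

lemma Tinv_0: "Tinv {0}" unfolding Tinv_def by simp

lemma phi_Pmult: "phi (g * P) = 0"
  using phi_mult[OF Tinv_0, of P g] phi_P by simp

lemma phi_ker: "phi f = 0 \<Longrightarrow> P dvd f"
proof -
  assume f: "phi f = 0"
  define r where "r = f mod P"
  have "f = f div P * P + r" unfolding r_def by (rule div_mult_mod_eq[symmetric])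
  then have "phi r = 0" using f phi_Pmult[of "f div P"] phi_add[of "f div P * P" r] by simp
  have dr: "r = 0 \<or> degree r < n" using degree_mod_less[OF P_nz, of f] degree_P by (auto simp: r_def)
  have "r = 0"
  proof (cases "r = 0")
    case False
    then have dr': "degree r \<le> n - 1" using dr by auto
    have "phi r = (\<Sum>i\<le>n - 1. coeff r i *s E i)" by (rule phi_eq[OF dr'])
    also have "{..n - 1} = {0..<n}" using n1 by auto
    finally have s0: "(\<Sum>i\<in>{0..<n}. coeff r i *s E i) = 0" using \<open>phi r = 0\<close> by simp
    define u where "u v = coeff r (the_inv_into {0..<n} E v)" for v
    have "(\<Sum>v\<in>E ` {0..<n}. u v *s v) = (\<Sum>i\<in>{0..<n}. u (E i) *s E i)"
      by (simp add: sum.reindex[OF inj_E])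
    also have "\<dots> = (\<Sum>i\<in>{0..<n}. coeff r i *s E i)"
      by (rule sum.cong) (auto simp: u_def the_inv_into_f_f[OF inj_E])
    finally have s1: "(\<Sum>v\<in>E ` {0..<n}. u v *s v) = 0" using s0 by simp
    have "coeff r i = 0" for i
    proof (cases "i < n")
      case True
      have "u (E i) = 0" using vs.independentD[OF indep_E _ _ s1] True by auto
      then show ?thesis using True by (simp add: u_def the_inv_into_f_f[OF inj_E])
    next
      case False then show ?thesis using dr by (auto intro: coeff_eq_0)
    qed
    then show ?thesis by (simp add: poly_eq_iff)
  qed simp
  then show "P dvd f" by (simp add: r_def mod_eq_0_iff_dvd)
qed

lemma phi_eq_iff: "phi f = phi g \<longleftrightarrow> P dvd (f - g)"
proof
  assume "phi f = phi g" then show "P dvd (f - g)" by (intro phi_ker) (simp add: phi_diff)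
next
  assume "P dvd (f - g)"
  then obtain k where "f - g = P * k" by (auto elim: dvdE)
  then have "phi (f - g) = 0" using phi_Pmult[of k] by (simp add: mult.commute)
  then show "phi f = phi g" by (simp add: phi_diff)
qed


lemma X_mult: "[:0, 1:] * (g :: 'f poly) = pCons 0 g" by simp

lemma max_sub: "maximal_subalgebra scale mul M \<Longrightarrow> subalgebra scale mul M \<and> M \<noteq> UNIV \<and> vs.subspace M"
  unfolding maximal_subalgebra_def subalgebra_def by auto

lemma notL_Tinv: "subalgebra scale mul S \<Longrightarrow> \<not> S \<subseteq> L \<Longrightarrow> Tinv S"
proof -
  assume S: "subalgebra scale mul S" "\<not> S \<subseteq> L"
  then obtain x where "x \<in> S" "x \<notin> L" by auto
  then show ?thesis using S sub_notL_inv unfolding Tinv_def subalgebra_def by blast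
qed

definition W where "W q = phi ` {g. q dvd g}"

lemma W_Tinv: "Tinv (W q)"
  unfolding Tinv_def vs.subspace_def
proof (intro conjI ballI allI)
  show "0 \<in> W q" unfolding W_def by (rule image_eqI[of _ _ 0]) auto
  fix x y assume "x \<in> W q" "y \<in> W q"
  then obtain f g where "q dvd f" "q dvd g" "x = phi f" "y = phi g" unfolding W_def by auto
  then show "x + y \<in> W q" unfolding W_def by (intro image_eqI[of _ _ "f + g"]) (auto simp: phi_add)
next
  fix c x assume "x \<in> W q"
  then obtain f where "q dvd f" "x = phi f" unfolding W_def by auto
  then show "c *s x \<in> W q" unfolding W_def by (intro image_eqI[of _ _ "smult c f"]) (auto simp: phi_smult dvd_smult)
next
  fix x assume "x \<in> W q"
  then obtain f where "q dvd f" "x = phi f" unfolding W_def by auto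
  moreover have "q dvd pCons 0 f" using \<open>q dvd f\<close> X_mult[of f] by (metis dvd_mult)
  ultimately show "T x \<in> W q" unfolding W_def
    by (intro image_eqI[of _ _ "pCons 0 f"]) (auto simp: phi_pCons0)
qed

lemma W_max:
  assumes q: "irreducible q" "q dvd P"
  shows "maximal_subalgebra scale mul (W q)"
  unfolding maximal_subalgebra_def
proof (intro conjI allI impI)
  show sub: "subalgebra scale mul (W q)" using W_Tinv T_sub_inv unfolding Tinv_def by blast
  show "W q \<noteq> UNIV"
  proof
    assume "W q = UNIV"
    then have "a \<in> W q" by simp
    then obtain g where g: "q dvd g" "phi g = phi 1" unfolding W_def by auto
    then have "P dvd (1 - g)" using phi_eq_iff by (metis phi_1)
    then have "q dvd (1 - g)" using q dvd_trans by blast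
    then have "q dvd (1 - g) + g" using g(1) by (rule dvd_add)
    then show False using q by (simp add: irreducible_not_unit)
  qed
  fix S assume S: "subalgebra scale mul S \<and> W q \<subseteq> S"
  show "S = W q \<or> S = UNIV"
  proof (cases "S \<subseteq> L")
    case True
    obtain c' g' where qc: "q = pCons c' g'" by (cases q)
    have "phi q \<in> W q" unfolding W_def by auto
    then have "phi q \<in> L" using S True by auto
    then have "c' = 0" using phi_L qc by simp
    then have qx: "q = [:0,1:] * g'" using qc by (simp add: X_mult)
    have "irreducible q" using q by simp
    then have "is_unit [:0,1::'f:] \<or> is_unit g'" by (rule irreducibleD[OF _ qx])
    moreover have "\<not> is_unit [:0, 1::'f:]" using is_unit_iff_degree[of "[:0, 1::'f:]"] by simp
    ultimately have "is_unit g'" by blast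
    then have qdx: "q dvd [:0,1:]" using qx mult_unit_dvd_iff by (metis dvd_refl)
    have "S \<subseteq> W q"
    proof
      fix x assume "x \<in> S"
      obtain f where f: "phi f = x" using phi_surj by blast
      obtain c g where fc: "f = pCons c g" by (cases f)
      have "x \<in> L" using \<open>x \<in> S\<close> True by auto
      then have "phi (pCons c g) \<in> L" using f fc by simp
      then have "c = 0" using phi_L by blast
      then have "f = [:0,1:] * g" using fc by (simp add: X_mult)
      then have "q dvd f" using qdx by (metis dvd_mult2)
      then show "x \<in> W q" unfolding W_def using f by auto
    qed
    then show ?thesis using S by auto
  next
    case False
    have TS: "Tinv S" using notL_Tinv S False by blast
    show ?thesis
    proof (cases "S = W q")
      case False
      then obtain x where x: "x \<in> S" "x \<notin> W q" using S by auto
      obtain f where f: "phi f = x" using phi_surj by blast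
      have "\<not> q dvd f" using x f unfolding W_def by auto
      then obtain u w where uw: "u * q + w * f = 1" using irr_bezout q by blast
      have "phi (u * q) \<in> S" using S unfolding W_def by auto
      moreover have "phi (w * f) \<in> S" using phi_mult[OF TS] x f by auto
      ultimately have "phi (u * q) + phi (w * f) \<in> S" using TS unfolding Tinv_def by (simp add: vs.subspace_add)
      then have "a \<in> S" using uw phi_add[of "u * q" "w * f"] by simp
      then have "S = UNIV" using inv_contains_a TS unfolding Tinv_def by blast
      then show ?thesis by simp
    qed simp
  qed
qed

lemma zero_in_frattini: "0 \<in> frattini scale mul"
  unfolding frattini_def using max_sub vs.subspace_0 by blast

lemma dir1:
  assumes sq: "squarefree P"
  shows "frattini scale mul = {0}"
proof -
  have "v = 0" if v: "v \<in> frattini scale mul" for v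
  proof -
    obtain f where f: "phi f = v" using phi_surj by blast
    have "P dvd f"
    proof (rule ccontr)
      assume nPf: "\<not> P dvd f"
      obtain d u w where d: "d = u * f + w * P" "d \<noteq> 0" "d dvd f" "d dvd P"
        using poly_min_comb[of f P] P_nz by blast
      obtain e where e: "P = d * e" using d(4) by (auto elim: dvdE)
      have enz: "e \<noteq> 0" using e P_nz by auto
      have "\<not> is_unit e"
      proof
        assume "is_unit e"
        then have "P dvd f" using e d(3) mult_unit_dvd_iff by metis
        then show False using nPf by simp
      qed
      then obtain q where q: "irreducible q" "q dvd e" using irr_factor enz by blast
      have qP: "q dvd P" using q(2) e by simp
      have "v \<in> W q" using v W_max[OF q(1) qP] unfolding frattini_def by blast
      then obtain g where g: "q dvd g" "phi g = phi f" unfolding W_def using f by auto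
      then have "P dvd (f - g)" using phi_eq_iff by metis
      then have "q dvd (f - g)" using qP dvd_trans by blast
      then have "q dvd (f - g) + g" using g by (intro dvd_add)
      then have qf: "q dvd f" by simp
      have "q dvd d" using d(1) qf qP by simp
      then have "q * q dvd d * e" using q(2) by (rule mult_dvd_mono)
      then have "q ^ 2 dvd P" using e by (simp add: power2_eq_square)
      then have "is_unit q" by (rule squarefreeD[OF sq])
      then show False using q(1) by (simp add: irreducible_not_unit)
    qed
    then have "phi f = phi 0" using phi_eq_iff[of f 0] by simp
    then show "v = 0" using f by simp
  qed
  then show ?thesis using zero_in_frattini by blast
qed

definition Msum where "Msum M g = {m + phi (w * g) | m w. m \<in> M}"

lemma Msum_props:
  assumes M: "Tinv M"
  shows "Tinv (Msum M g)" "M \<subseteq> Msum M g" "phi g \<in> Msum M g"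
proof -
  have sM: "vs.subspace M" and tM: "\<forall>y\<in>M. T y \<in> M" using M unfolding Tinv_def by auto
  show "M \<subseteq> Msum M g"
  proof
    fix m assume "m \<in> M" then show "m \<in> Msum M g" unfolding Msum_def by (intro CollectI exI[of _ m] exI[of _ 0]) simp
  qed
  show "phi g \<in> Msum M g" unfolding Msum_def using vs.subspace_0[OF sM]
    by (intro CollectI exI[of _ 0] exI[of _ 1]) simp
  show "Tinv (Msum M g)"
    unfolding Tinv_def vs.subspace_def
  proof (intro conjI ballI allI)
    show "0 \<in> Msum M g" unfolding Msum_def using vs.subspace_0[OF sM]
      by (intro CollectI exI[of _ 0] exI[of _ 0]) simp
    fix x y assume "x \<in> Msum M g" "y \<in> Msum M g"
    then obtain m1 w1 m2 w2 where "x = m1 + phi (w1 * g)" "y = m2 + phi (w2 * g)" "m1 \<in> M" "m2 \<in> M"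
      unfolding Msum_def by auto
    then show "x + y \<in> Msum M g" unfolding Msum_def
      by (intro CollectI exI[of _ "m1 + m2"] exI[of _ "w1 + w2"])
         (auto simp: vs.subspace_add[OF sM] phi_add algebra_simps)
  next
    fix c x assume "x \<in> Msum M g"
    then obtain m w where "x = m + phi (w * g)" "m \<in> M" unfolding Msum_def by auto
    then show "c *s x \<in> Msum M g" unfolding Msum_def
      by (intro CollectI exI[of _ "c *s m"] exI[of _ "smult c w"])
         (auto simp: vs.subspace_scale[OF sM] phi_smult vs.scale_right_distrib)
  next
    fix x assume "x \<in> Msum M g"
    then obtain m w where "x = m + phi (w * g)" "m \<in> M" unfolding Msum_def by auto
    moreover have e: "phi (([:0,1:] * w) * g) = T (phi (w * g))"
      by (simp add: X_mult phi_pCons0)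
    ultimately show "T x \<in> Msum M g" unfolding Msum_def
      by (intro CollectI exI[of _ "T m"] exI[of _ "[:0,1:] * w"])
         (auto simp only: tM T_add e)
  qed
qed

lemma Msum_max:
  assumes M: "maximal_subalgebra scale mul M" "Tinv M"
  shows "Msum M g = M \<or> Msum M g = UNIV"
proof -
  have "subalgebra scale mul (Msum M g)" using Msum_props[OF M(2)] T_sub_inv unfolding Tinv_def by blast
  then show ?thesis using M(1) Msum_props(2)[OF M(2)] unfolding maximal_subalgebra_def by blast
qed

lemma dir2:
  assumes fr: "frattini scale mul = {0}"
  shows "squarefree P"
proof (rule ccontr)
  assume "\<not> squarefree P"
  then obtain x where x: "x ^ 2 dvd P" "\<not> x dvd 1" by (rule not_squarefreeE)
  then obtain k where k: "P = x ^ 2 * k" by (auto elim: dvdE)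
  define h where "h = x * k"
  have Pxh: "P = x * h" using k by (simp add: h_def power2_eq_square mult.assoc)
  have hnz: "h \<noteq> 0" using Pxh P_nz by auto
  have phnz: "phi h \<noteq> 0"
  proof
    assume "phi h = 0"
    then have "P dvd h" by (rule phi_ker)
    then obtain m where "h = P * m" by (auto elim: dvdE)
    then have "1 * h = (x * m) * h" using Pxh by (simp add: algebra_simps)
    then have "1 = x * m" using hnz mult_right_cancel by blast
    then have "x dvd 1" by (metis dvdI)
    then show False using x by simp
  qed
  have "phi h \<in> M" if M: "maximal_subalgebra scale mul M" for M
  proof (cases "M \<subseteq> L")
    case True
    have "L = M \<or> L = UNIV" using M True L_subalg unfolding maximal_subalgebra_def by blast
    then have MeqL: "M = L" using a_notin_L by auto
    obtain c g where hc: "h = pCons c g" by (cases h)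
    have "poly P 0 = 0" using coeff_P_0 by (simp add: poly_0_coeff_0)
    then have "poly x 0 * poly x 0 * poly k 0 = 0" using k by (simp add: power2_eq_square)
    then have "poly h 0 = 0" by (simp add: h_def)
    then have "c = 0" using hc by simp
    then show ?thesis using MeqL hc phi_L by simp
  next
    case False
    have sa: "subalgebra scale mul M" and Mne: "M \<noteq> UNIV" using M unfolding maximal_subalgebra_def by auto
    have TM: "Tinv M" using notL_Tinv[OF sa False] .
    have sM: "vs.subspace M" using TM unfolding Tinv_def by auto
    show ?thesis
    proof (rule ccontr)
      assume nh: "phi h \<notin> M"
      have "Msum M h \<noteq> M" using Msum_props(3)[OF TM, of h] nh by auto
      then have "Msum M h = UNIV" using Msum_max[OF M TM] by auto
      then have "a \<in> Msum M h" by simp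
      then obtain m1 w1 where m1: "a = m1 + phi (w1 * h)" "m1 \<in> M" unfolding Msum_def by auto
      have "Msum M x \<noteq> M"
      proof
        assume "Msum M x = M"
        then have "phi x \<in> M" using Msum_props(3)[OF TM, of x] by auto
        then have "phi (k * x) \<in> M" by (rule phi_mult[OF TM])
        then show False using nh by (simp add: h_def mult.commute)
      qed
      then have "Msum M x = UNIV" using Msum_max[OF M TM] by auto
      then have "a \<in> Msum M x" by simp
      then obtain m2 w2 where m2: "a = m2 + phi (w2 * x)" "m2 \<in> M" unfolding Msum_def by auto
      define i1 where "i1 = 1 - w1 * h"
      define i2 where "i2 = 1 - w2 * x"
      have "phi i1 = a - phi (w1 * h)" by (simp add: i1_def phi_diff)
      also have "\<dots> = m1" using m1(1) add_diff_cancel by metis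
      finally have pi1: "phi i1 \<in> M" using m1(2) by simp
      have "phi i2 = a - phi (w2 * x)" by (simp add: i2_def phi_diff)
      also have "\<dots> = m2" using m2(1) add_diff_cancel by metis
      finally have pi2: "phi i2 \<in> M" using m2(2) by simp
      have id: "(i2 + w2 * x) * i1 + (w1 * h) * i2 + (w1 * w2) * P = 1"
        by (simp add: i1_def i2_def Pxh algebra_simps)
      have "phi ((i2 + w2 * x) * i1) \<in> M" by (rule phi_mult[OF TM pi1])
      moreover have "phi ((w1 * h) * i2) \<in> M" by (rule phi_mult[OF TM pi2])
      moreover have "phi ((w1 * w2) * P) = 0" by (rule phi_Pmult)
      ultimately have "phi ((i2 + w2 * x) * i1 + (w1 * h) * i2 + (w1 * w2) * P) \<in> M"
        using sM by (simp add: phi_add vs.subspace_add)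
      then have "a \<in> M" using id by simp
      then have "M = UNIV" using inv_contains_a TM unfolding Tinv_def by blast
      then show False using Mne by simp
    qed
  qed
  then have "phi h \<in> frattini scale mul" unfolding frattini_def by blast
  then show False using fr phnz by simp
qed

lemma main: "frattini scale mul = {0} \<longleftrightarrow> squarefree P"
  using dir1 dir2 by blast

end

theorem mainTheorem8:
  fixes scale :: "'f::field \<Rightarrow> 'v::ab_group_add \<Rightarrow> 'v"
    and mul :: "'v \<Rightarrow> 'v \<Rightarrow> 'v"
    and a :: 'v and n :: nat and \<alpha> :: "nat \<Rightarrow> 'f"
  assumes "leibniz_algebra scale mul"
    and "generated_by scale mul a"
    and "n \<ge> 1"
    and "inj_on (lpow mul a) {1..n}"
    and "\<not> module.dependent scale (lpow mul a ` {1..n})"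
    and "module.span scale (lpow mul a ` {1..n}) = UNIV"
    and "mul a (lpow mul a n) = (\<Sum>k=2..n. scale (\<alpha> k) (lpow mul a k))"
  shows "frattini scale mul = {0} \<longleftrightarrow> squarefree (cyc_poly n \<alpha>)"
proof -
  interpret cyc scale mul a n \<alpha>
    using assms by (unfold_locales) auto
  show ?thesis using main by (simp add: P_def)
qed

end
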